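(* For every $p\in(0,1)$ and every $a>a_*=p^p(1-p)^{1-p}$, $\Upsilon_p(a)<0$, where $$\Upsilon_p(a)=\int_\beta^\alpha\frac{\eta_{p,a}(\kappa)}{\sqrt{Q_{p,a}(\kappa)}}\,d\kappa,$$ $$\eta_{p,a}(\kappa)=-(p+1)a\kappa^{1-p}-(2-p)a\kappa^{-1-p}+(1-p)^2(2p+1)\kappa^{p+1}+2(4p^2-4p+1)\kappa^{p-1}+p^2(3-2p)\kappa^{p-3},$$ $Q_{p,a}(\kappa)=a\kappa^{2(1-p)}-(1-p)^2\kappa^2-p^2$, and $\beta<\alpha$ are the two positive zeros of $Q_{p,a}$.
   Context: For $p\in(0,1)$ and $a>a_*$, $Q_{p,a}$ has exactly two positive zeros $\beta<\alpha$ and is positive between them; the integral is a convergent improper integral. (Geometrically, $\Upsilon_p(a)$ is the second variation of $\mathbf{\Theta}_p$ in the direction $\phi\equiv1$ along a half-period of the curvature of the $p$-elastic curve $\gamma_a$.) *)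

theory Defs
  imports "HOL-Analysis.Analysis"
begin

definition Qpa :: "real \<Rightarrow> real \<Rightarrow> real \<Rightarrow> real" where
  "Qpa p a \<kappa> = a * \<kappa> powr (2 * (1 - p)) - (1 - p)^2 * \<kappa>^2 - p^2"

definition eta :: "real \<Rightarrow> real \<Rightarrow> real \<Rightarrow> real" where
  "eta p a \<kappa> =
     - (p + 1) * a * \<kappa> powr (1 - p)
     - (2 - p) * a * \<kappa> powr (-1 - p)
     + (1 - p)^2 * (2 * p + 1) * \<kappa> powr (p + 1)
     + 2 * (4 * p^2 - 4 * p + 1) * \<kappa> powr (p - 1)
     + p^2 * (3 - 2 * p) * \<kappa> powr (p - 3)"

definition a_star :: "real \<Rightarrow> real" where
  "a_star p = p powr p * (1 - p) powr (1 - p)"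

text \<open>Upsilon over the interval between the zeros beta < alpha of Q (Lebesgue integral;
  the improper integral is absolutely convergent).\<close>
definition Upsilon :: "real \<Rightarrow> real \<Rightarrow> real \<Rightarrow> real \<Rightarrow> real" where
  "Upsilon p a \<beta> \<alpha> = (LBINT \<kappa>=\<beta>..\<alpha>. eta p a \<kappa> / sqrt (Qpa p a \<kappa>))"

end

theory Submission
  imports Defs
begin


lemma key_poly:
  fixes k y p a u w :: real assumes "k*u = 1" "y*w = 1"
  shows "((2-p)*((p-2)*(y*u^3)) - (p+1)*(p*(y*u))) * (a * (k^2*w^2) - (1-p)^2*k^2 - p^2)
        + ((2-p)*(y*u^2) - (p+1)*y) * ((a * (2*(1-p)) * (k^2*w^2*u) - (1-p)^2 * (2*k)) / 2)
     = (- (p + 1) * a * (k*w) - (2 - p) * a * (u*w) + (1 - p)^2 * (2 * p + 1) * (y*k)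
        + 2 * (4 * p^2 - 4 * p + 1) * (y*u) + p^2 * (3 - 2 * p) * (y*u^3))
      - (p*(1-p)*(2*p^2-2*p-1) * (y*u) - (1-p)^2*p^2 * (y*k) - p^2*(1-p)^2 * (y*u^3))"
  using assms by algebra

lemma pw2:
  fixes k p :: real assumes k: "k > 0"
  shows "k powr (p-2) = k powr p * (1/k)^2" "k powr (p-3) = k powr p * (1/k)^3"
    "k powr (p-3) = k powr p * (1/k)^3"
    "k powr (p-1) = k powr p * (1/k)" "k powr (p+1) = k powr p * k"
    "k powr (1-p) = k * (1/k powr p)" "k powr (-1-p) = (1/k) * (1/k powr p)"
    "k powr (2*(1-p)) = k^2 * (1/k powr p)^2" "k powr (2*(1-p) - 1) = k * (1/k powr p)^2"
proof -
  have e2: "k powr 2 = k^2" "k powr 3 = k^3" "k powr 1 = k" using k by (simp_all add: powr_numeral)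
  have pp: "k powr p > 0" using k by simp
  have sq: "k powr (2*p) = (k powr p)^2" unfolding power2_eq_square mult_2 powr_add ..
  show "k powr (p-2) = k powr p * (1/k)^2" by (simp add: powr_diff e2 power_one_over divide_inverse power_inverse)
  show "k powr (p-3) = k powr p * (1/k)^3"
    by (simp add: powr_diff e2 power_one_over divide_inverse power_inverse flip: diff_diff_eq)
  show "k powr (p-3) = k powr p * (1/k)^3" by (simp add: powr_diff e2 power_one_over divide_inverse power_inverse)
  show "k powr (p-1) = k powr p * (1/k)" using k by (simp add: powr_diff e2 divide_inverse)
  show "k powr (p+1) = k powr p * k" using k by (simp add: powr_add e2)
  show "k powr (1-p) = k * (1/k powr p)" using k by (simp add: powr_diff e2 divide_inverse)
  show "k powr (-1-p) = (1/k) * (1/k powr p)"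
  proof -
    have "k powr (-1-p) = k powr (- (1 + p))" by (rule arg_cong[where f="\<lambda>x. k powr x"]) simp
    also have "\<dots> = 1 / (k powr 1 * k powr p)" unfolding powr_minus powr_add by (simp add: divide_inverse)
    finally show ?thesis using e2 by simp
  qed
  show "k powr (2*(1-p)) = k^2 * (1/k powr p)^2"
  proof -
    have "k powr (2*(1-p)) = k powr (2 - 2*p)" by (simp add: algebra_simps)
    also have "\<dots> = k powr 2 / k powr (2*p)" by (rule powr_diff)
    also have "\<dots> = k^2 / (k powr p)^2" unfolding e2 sq ..
    finally show ?thesis by (simp add: power_one_over divide_inverse power_inverse)
  qed
  show "k powr (2*(1-p) - 1) = k * (1/k powr p)^2"
  proof -
    have "k powr (2*(1-p) - 1) = k powr (1 - 2*p)" by (simp add: algebra_simps)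
    also have "\<dots> = k powr 1 / k powr (2*p)" by (rule powr_diff)
    also have "\<dots> = k / (k powr p)^2" unfolding e2 sq ..
    finally show ?thesis by (simp add: power_one_over divide_inverse power_inverse)
  qed
qed

definition nn :: "real \<Rightarrow> real \<Rightarrow> real" where
  "nn p k = p*(1-p)*(2*p^2-2*p-1) * k powr (p-1) - (1-p)^2*p^2 * k powr (p+1)
           
            - p^2*(1-p)^2 * k powr (p-3)"

definition FF :: "real \<Rightarrow> real \<Rightarrow> real \<Rightarrow> real" where
  "FF p a k = ((2-p)*k powr (p-2) - (p+1)*k powr p) * sqrt (Qpa p a k)"

lemma aux_s: fixes ss xx bb qq :: real assumes "ss > 0"
  shows "xx * ss + bb * (qq / (2 * ss)) = (xx * ss^2 + bb * (qq / 2)) / ss"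
  using assms by (simp add: field_simps power2_eq_square)

lemma FF_deriv:
  assumes k: "k > 0" and Q: "Qpa p a k > 0"
  shows "DERIV (FF p a) k :> (eta p a k - nn p k) / sqrt (Qpa p a k)"
proof -
  define Q' where "Q' = a * (2*(1-p)) * k powr (2*(1-p) - 1) - (1-p)^2 * (2*k)"
  have dQ: "DERIV (Qpa p a) k :> Q'"
    unfolding Qpa_def[abs_def] Q'_def using k
    by (auto intro!: derivative_eq_intros)
  have dF: "DERIV (FF p a) k :> ((2-p)*((p-2)*k powr (p-3)) - (p+1)*(p*k powr (p-1))) * sqrt (Qpa p a k)
        + ((2-p)*k powr (p-2) - (p+1)*k powr p) * (Q' / (2 * sqrt (Qpa p a k)))"
  proof -
    have sq0: "sqrt (Qpa p a k) \<noteq> 0" using Q by simp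
    show ?thesis unfolding FF_def[abs_def] using k Q
      by (auto intro!: derivative_eq_intros dQ) (simp add: field_simps sq0)
  qed
  define s where "s = sqrt (Qpa p a k)"
  have s: "s > 0" "s^2 = Qpa p a k" using Q by (auto simp: s_def)
  have key: "((2-p)*((p-2)*k powr (p-3)) - (p+1)*(p*k powr (p-1))) * Qpa p a k
        + ((2-p)*k powr (p-2) - (p+1)*k powr p) * (Q' / 2) = eta p a k - nn p k"
    unfolding Qpa_def eta_def nn_def Q'_def pw2[OF k]
    by (rule key_poly) (use k in auto)
  have "((2-p)*((p-2)*k powr (p-3)) - (p+1)*(p*k powr (p-1))) * s
        + ((2-p)*k powr (p-2) - (p+1)*k powr p) * (Q' / (2 * s)) = (eta p a k - nn p k) / s"
    using s key aux_s[OF s(1)] by simp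
  then show ?thesis using dF by (simp add: s_def)
qed




lemma interp:
  fixes x y z :: real assumes "x \<noteq> y"
  shows "(1 - (z - x)/(y - x)) * x + ((z - x)/(y - x)) * y = z"
proof -
  have ne: "y - x \<noteq> 0" using assms by simp
  have g: "(1 - t) * x + t * y = x + t * (y - x)" for t by (simp add: algebra_simps)
  have "(1 - (z - x)/(y - x)) * x + ((z - x)/(y - x)) * y = x + ((z - x)/(y - x)) * (y - x)"
    by (rule g)
  also have "\<dots> = z" using ne by simp
  finally show ?thesis .
qed

lemma Q_lower:
  fixes p a \<beta> \<alpha> :: real
  assumes p: "0 < p" "p < 1" and a: "a > a_star p"
    and b: "0 < \<beta>" "\<beta> < \<alpha>" and z: "Qpa p a \<beta> = 0" "Qpa p a \<alpha> = 0"
  shows "\<exists>c>0. \<forall>k. \<beta> \<le> k \<longrightarrow> k \<le> \<alpha> \<longrightarrow> Qpa p a k \<ge> c * (k - \<beta>) * (\<alpha> - k)"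
proof -
  define r where "r = 1 - p"
  have r: "0 < r" "r < 1" using p by (auto simp: r_def)
  have as: "a_star p > 0" using p by (simp add: a_star_def)
  have a0: "a > 0" using a as by linarith
  define h where "h u = a * u powr r - r^2 * u - p^2" for u
  have Qh: "Qpa p a k = h (k^2)" if "k > 0" for k
  proof -
    have e: "k^2 = k powr 2" using that by (simp add: powr_numeral)
    have "(k^2) powr r = k powr (2*r)" unfolding e powr_powr ..
    then have "k powr (2*(1-p)) = (k^2) powr r" by (simp add: r_def)
    then show ?thesis by (simp add: Qpa_def h_def r_def)
  qed
  have conc: "concave_on {0<..} h"
  proof (rule f''_le0_imp_concave[where f' = "\<lambda>u. a * (r * u powr (r - 1)) - r^2"
        and f'' = "\<lambda>u. a * (r * ((r - 1) * u powr (r - 1 - 1)))"])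
    show "convex {0::real<..}" by simp
    show "DERIV h x :> a * (r * x powr (r - 1)) - r^2" if "x \<in> {0<..}" for x
      unfolding h_def[abs_def] using that by (auto intro!: derivative_eq_intros)
    show "DERIV (\<lambda>u. a * (r * u powr (r - 1)) - r^2) x :> a * (r * ((r - 1) * x powr (r - 1 - 1)))"
      if "x \<in> {0<..}" for x
      using that by (auto intro!: derivative_eq_intros)
    show "a * (r * ((r - 1) * x powr (r - 1 - 1))) \<le> 0" if "x \<in> {0<..}" for x
      using that r a0 by (simp add: mult_nonneg_nonpos mult_nonneg_nonpos2 mult_nonpos_nonneg)
  qed
  define U where "U = (a / r) powr (1 / p)"
  have U0: "U > 0" using a0 r by (simp add: U_def)
  have Up: "U powr p = a / r" using a0 r p by (simp add: U_def powr_powr)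
  have "U powr r = U / U powr p" using U0 by (simp add: r_def powr_diff)
  then have aU: "a * U powr r = r * U" using Up r a0 by (simp add: field_simps)
  have "(p / r) powr p < U powr p"
  proof -
    have "(p / r) powr p = p powr p / r powr p" using p r by (simp add: powr_divide)
    also have "\<dots> < a / r"
    proof -
      have "a_star p = p powr p * r powr r" by (simp add: a_star_def r_def)
      also have "r powr r = r / r powr p" using r by (simp add: r_def powr_diff)
      finally have "a_star p = p powr p * r / r powr p" by simp
      with a have "p powr p * r / r powr p < a" by simp
      then show ?thesis using r by (simp add: field_simps)
    qed
    finally show ?thesis using Up by simp
  qed
  then have "p / r < U" using p r U0 by (meson less_le_not_le nle_le powr_mono2 less_imp_le divide_pos_pos)
  then have pU: "p < r * U" using r by (simp add: field_simps)
  define M where "M = h U"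
  have hU: "h U = p * (r*U - p)" unfolding h_def using aU by (simp add: r_def algebra_simps power2_eq_square)
  have M: "M > 0" unfolding M_def hU using pU p by simp
  define B where "B = \<beta>^2"
  define A where "A = \<alpha>^2"
  have B0: "B > 0" and BA: "B < A" using b by (auto simp: B_def A_def power_strict_mono)
  have hB: "h B = 0" using z b Qh B_def by auto
  have hA: "h A = 0" using z b Qh A_def by auto
  have cD: "h ((1 - t) * x + t * y) \<ge> (1 - t) * h x + t * h y"
    if "0 \<le> t" "t \<le> 1" "x > 0" "y > 0" for t x y
    using concave_onD[OF conc, of t x y] that by simp
  have UA: "U < A"
  proof (rule ccontr)
    assume "\<not> U < A"
    then have "U \<ge> A" by simp
    define t where "t = (A - B) / (U - B)"
    have t: "0 < t" "t \<le> 1" using BA \<open>U \<ge> A\<close> by (auto simp: t_def)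
    have "(1 - t) * B + t * U = A" using BA \<open>U \<ge> A\<close> unfolding t_def by (intro interp) simp
    then have "h A \<ge> (1 - t) * h B + t * h U" using cD[of t B U] t B0 U0 by simp
    then have "0 \<ge> t * M" using hA hB M_def by simp
    with mult_pos_pos[OF t(1) M] show False by simp
  qed
  have BU: "B < U"
  proof (rule ccontr)
    assume "\<not> B < U"
    then have "U \<le> B" by simp
    define t where "t = (B - A) / (U - A)"
    have t: "0 < t" "t \<le> 1" using BA \<open>U \<le> B\<close> by (auto simp: t_def divide_simps)
    have "(1 - t) * A + t * U = B" using BA \<open>U \<le> B\<close> unfolding t_def by (intro interp) simp
    then have "h B \<ge> (1 - t) * h A + t * h U" using cD[of t A U] t B0 BA U0 by simp
    then have "0 \<ge> t * M" using hA hB M_def by simp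
    with mult_pos_pos[OF t(1) M] show False by simp
  qed
  have hl: "h u \<ge> M * ((u - B) * (A - u)) / (A - B)^2" if "B \<le> u" "u \<le> A" for u
  proof (cases "u \<le> U")
    case True
    define t where "t = (u - B) / (U - B)"
    have t: "0 \<le> t" "t \<le> 1" using that True BU by (auto simp: t_def)
    have "(1 - t) * B + t * U = u" using BU unfolding t_def by (intro interp) simp
    then have "h u \<ge> t * M" using cD[of t B U] t B0 U0 hB M_def by simp
    moreover have "t \<ge> ((u - B) * (A - u)) / (A - B)^2"
    proof -
      have "((u - B) * (A - u)) / (A - B)^2 \<le> ((u - B) * (A - B)) / ((U - B) * (A - B))"
        using that BU UA True
        by (intro frac_le mult_left_mono mult_mono) (auto simp: power2_eq_square)
      also have "\<dots> = t" using BA by (simp add: t_def)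
      finally show ?thesis .
    qed
    ultimately have hu: "h u \<ge> t * M" and qt: "((u - B) * (A - u)) / (A - B)^2 \<le> t" by auto
    have "M * (((u - B) * (A - u)) / (A - B)^2) \<le> M * t"
      by (rule mult_left_mono[OF qt]) (use M in simp)
    then show ?thesis using hu by (simp add: mult.commute)
  next
    case False
    define t where "t = (A - u) / (A - U)"
    have t: "0 \<le> t" "t \<le> 1" using that False UA by (auto simp: t_def)
    have "(A - u) / (A - U) = (u - A) / (U - A)" by (metis minus_diff_eq minus_divide_divide)
    then have "(1 - t) * A + t * U = u" using UA unfolding t_def by (simp only:) (intro interp, simp)
    then have "h u \<ge> t * M" using cD[of t A U] t B0 BA U0 hA M_def by simp
    moreover have "t \<ge> ((u - B) * (A - u)) / (A - B)^2"
    proof -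
      have "((A - u) * (u - B)) / (A - B)^2 \<le> ((A - u) * (A - B)) / ((A - U) * (A - B))"
        using that BU UA False
        by (intro frac_le mult_left_mono mult_mono) (auto simp: power2_eq_square)
      also have "\<dots> = t" using BA by (simp add: t_def)
      finally show ?thesis by (simp add: mult.commute)
    qed
    ultimately have hu: "h u \<ge> t * M" and qt: "((u - B) * (A - u)) / (A - B)^2 \<le> t" by auto
    have "M * (((u - B) * (A - u)) / (A - B)^2) \<le> M * t"
      by (rule mult_left_mono[OF qt]) (use M in simp)
    then show ?thesis using hu by (simp add: mult.commute)
  qed
  define c where "c = M * \<beta>^2 / (A - B)^2"
  have c: "c > 0" using M b BA by (simp add: c_def)
  show ?thesis
  proof (intro exI[of _ c] conjI c allI impI)
    fix k assume k: "\<beta> \<le> k" "k \<le> \<alpha>"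
    have u: "B \<le> k^2" "k^2 \<le> A" using k b by (auto simp: B_def A_def power_mono)
    have "(k - \<beta>) * (\<alpha> - k) * \<beta>^2 \<le> (k^2 - B) * (A - k^2)"
    proof -
      have "(k^2 - B) * (A - k^2) = ((k - \<beta>) * (\<alpha> - k)) * ((k + \<beta>) * (\<alpha> + k))"
        by (simp add: B_def A_def power2_eq_square algebra_simps)
      moreover have "\<beta>^2 \<le> (k + \<beta>) * (\<alpha> + k)" using k b
        by (simp add: power2_eq_square mult_mono)
      moreover have "0 \<le> (k - \<beta>) * (\<alpha> - k)" using k by simp
      ultimately show ?thesis by (simp add: mult_left_mono)
    qed
    then have "M * ((k - \<beta>) * (\<alpha> - k) * \<beta>^2) / (A - B)^2 \<le> M * ((k^2 - B) * (A - k^2)) / (A - B)^2"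
      using M BA by (intro divide_right_mono mult_left_mono) auto
    moreover have "c * (k - \<beta>) * (\<alpha> - k) = M * ((k - \<beta>) * (\<alpha> - k) * \<beta>^2) / (A - B)^2"
      by (simp add: c_def)
    ultimately have "c * (k - \<beta>) * (\<alpha> - k) \<le> M * ((k^2 - B) * (A - k^2)) / (A - B)^2"
      by simp
    also have "\<dots> \<le> h (k^2)" using hl u by blast
    also have "\<dots> = Qpa p a k" using Qh k b by simp
    finally show "Qpa p a k \<ge> c * (k - \<beta>) * (\<alpha> - k)" .
  qed
qed




lemma x_range_strict:
  fixes \<beta> \<alpha> k :: real assumes "\<beta> < k" "k < \<alpha>"
  shows "-1 < (2*k - \<beta> - \<alpha>) / (\<alpha> - \<beta>)" "(2*k - \<beta> - \<alpha>) / (\<alpha> - \<beta>) < 1"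
proof -
  have d: "\<alpha> - \<beta> > 0" using assms by simp
  show "-1 < (2*k - \<beta> - \<alpha>) / (\<alpha> - \<beta>)" using d assms by (simp add: pos_less_divide_eq)
  show "(2*k - \<beta> - \<alpha>) / (\<alpha> - \<beta>) < 1" using d assms by (simp add: pos_divide_less_eq)
qed

lemma x_range:
  fixes \<beta> \<alpha> k :: real assumes "\<beta> \<le> k" "k \<le> \<alpha>" "\<beta> < \<alpha>"
  shows "-1 \<le> (2*k - \<beta> - \<alpha>) / (\<alpha> - \<beta>)" "(2*k - \<beta> - \<alpha>) / (\<alpha> - \<beta>) \<le> 1"
proof -
  have d: "\<alpha> - \<beta> > 0" using assms by simp
  show "-1 \<le> (2*k - \<beta> - \<alpha>) / (\<alpha> - \<beta>)" using d assms by (simp add: pos_le_divide_eq)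
  show "(2*k - \<beta> - \<alpha>) / (\<alpha> - \<beta>) \<le> 1" using d assms by (simp add: pos_divide_le_eq)
qed

lemma one_minus_x2:
  fixes \<beta> \<alpha> k :: real assumes "\<beta> < \<alpha>"
  shows "1 - ((2*k - \<beta> - \<alpha>) / (\<alpha> - \<beta>))^2 = 4 * ((k - \<beta>) * (\<alpha> - k)) / (\<alpha> - \<beta>)^2"
proof -
  have d: "(\<alpha> - \<beta>)^2 \<noteq> 0" using assms by simp
  have r1: "(\<alpha>-\<beta>)^2 - (2*k-\<beta>-\<alpha>)^2 = 4*((k-\<beta>)*(\<alpha>-k))"
    by (simp add: algebra_simps power2_eq_square)
  have "1 - ((2*k - \<beta> - \<alpha>) / (\<alpha> - \<beta>))^2 = (\<alpha>-\<beta>)^2/(\<alpha>-\<beta>)^2 - (2*k-\<beta>-\<alpha>)^2/(\<alpha>-\<beta>)^2"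
    using d by (simp add: power_divide)
  also have "\<dots> = ((\<alpha>-\<beta>)^2 - (2*k-\<beta>-\<alpha>)^2)/(\<alpha>-\<beta>)^2" by (rule diff_divide_distrib[symmetric])
  finally show ?thesis unfolding r1 .
qed

lemma final_sq:
  fixes X d :: real assumes "X > 0" "d > 0"
  shows "inverse (2 * sqrt X / d) * (2 / d) = 1 / sqrt X"
  using assms by (simp add: field_simps)

lemma arcsin_integrable:
  fixes \<beta> \<alpha> :: real assumes "\<beta> < \<alpha>"
  shows "set_integrable lborel (einterval \<beta> \<alpha>) (\<lambda>k. 1 / sqrt ((k - \<beta>) * (\<alpha> - k)))"
proof -
  define G where "G k = arcsin ((2*k - \<beta> - \<alpha>) / (\<alpha> - \<beta>))" for k
  have d: "DERIV G k :> 1 / sqrt ((k - \<beta>) * (\<alpha> - k))" if "\<beta> < k" "k < \<alpha>" for k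
  proof -
    define x where "x = (2*k - \<beta> - \<alpha>) / (\<alpha> - \<beta>)"
    have x: "-1 < x" "x < 1" using x_range_strict[OF that] by (auto simp: x_def)
    have "DERIV G k :> inverse (sqrt (1 - x^2)) * (2 / (\<alpha> - \<beta>))"
      unfolding G_def[abs_def]
    proof (rule DERIV_chain2[of arcsin])
      show "DERIV arcsin ((2*k - \<beta> - \<alpha>) / (\<alpha> - \<beta>)) :> inverse (sqrt (1 - x^2))"
        using DERIV_arcsin[OF x] by (simp add: x_def)
      show "DERIV (\<lambda>k. (2*k - \<beta> - \<alpha>) / (\<alpha> - \<beta>)) k :> 2 / (\<alpha> - \<beta>)"
      proof -
        have e: "(2 * \<alpha> - 2 * \<beta>) / ((\<alpha> - \<beta>) * (\<alpha> - \<beta>)) = 2 / (\<alpha> - \<beta>)"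
        proof -
          have "2 * \<alpha> - 2 * \<beta> = 2 * (\<alpha> - \<beta>)" by (simp add: algebra_simps)
          moreover have "(2 * (\<alpha> - \<beta>)) / ((\<alpha> - \<beta>) * (\<alpha> - \<beta>)) = 2 / (\<alpha> - \<beta>)"
            by (rule mult_divide_mult_cancel_right) (use assms in simp)
          ultimately show ?thesis by (simp only:)
        qed
        show ?thesis using assms by (auto intro!: derivative_eq_intros simp: e)
      qed
    qed
    moreover have "1 - x^2 = 4 * ((k - \<beta>) * (\<alpha> - k)) / (\<alpha> - \<beta>)^2"
      unfolding x_def by (rule one_minus_x2[OF assms])
    moreover have "sqrt (4 * ((k - \<beta>) * (\<alpha> - k)) / (\<alpha> - \<beta>)^2) = 2 * sqrt ((k - \<beta>) * (\<alpha> - k)) / (\<alpha> - \<beta>)"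
      using assms by (simp add: real_sqrt_divide real_sqrt_mult)
    moreover have "(k - \<beta>) * (\<alpha> - k) > 0" using that by simp
    ultimately show ?thesis using assms final_sq[of "(k - \<beta>) * (\<alpha> - k)" "\<alpha> - \<beta>"] by simp
  qed
  have cG: "continuous_on {\<beta>..\<alpha>} G" unfolding G_def using assms
    by (intro continuous_intros) (auto dest: x_range[OF _ _ assms])
  show ?thesis
  proof (rule interval_integral_FTC_nonneg[where F = G and A = "G \<beta>" and B = "G \<alpha>"])
    show "ereal \<beta> < ereal \<alpha>" using assms by simp
    show "DERIV G x :> 1 / sqrt ((x - \<beta>) * (\<alpha> - x))" if "ereal \<beta> < ereal x" "ereal x < ereal \<alpha>" for x
      using d that by simp
    show "isCont (\<lambda>k. 1 / sqrt ((k - \<beta>) * (\<alpha> - k))) x" if "ereal \<beta> < ereal x" "ereal x < ereal \<alpha>" for x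
      using that by (auto intro!: continuous_intros)
    show "AE x in lborel. ereal \<beta> < ereal x \<longrightarrow> ereal x < ereal \<alpha> \<longrightarrow> 0 \<le> 1 / sqrt ((x - \<beta>) * (\<alpha> - x))"
      by (auto intro!: AE_I2)
    show "((G \<circ> real_of_ereal) \<longlongrightarrow> G \<beta>) (at_right (ereal \<beta>))"
      unfolding ereal_tendsto_simps1
      using continuous_on_Icc_at_rightD[OF cG assms] .
    show "((G \<circ> real_of_ereal) \<longlongrightarrow> G \<alpha>) (at_left (ereal \<alpha>))"
      unfolding ereal_tendsto_simps1
      using continuous_on_Icc_at_leftD[OF cG assms] .
  qed
qed




lemma nn_neg: assumes "0 < p" "p < 1" "k > 0" shows "nn p k < 0"
proof -
  have "p*p < p*1" using assms by (intro mult_strict_left_mono) auto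
  then have n1: "2*p^2-2*p-1 < 0" by (simp add: power2_eq_square)
  have "p*(1-p) > 0" using assms by simp
  then have "p*(1-p)*(2*p^2-2*p-1) < 0" using n1 by (rule mult_pos_neg)
  then have t1: "p*(1-p)*(2*p^2-2*p-1) * k powr (p-1) < 0" using assms by (simp add: mult_neg_pos)
  have t2: "(1-p)^2*p^2 * k powr (p+1) > 0" using assms by simp
  have t3: "p^2*(1-p)^2 * k powr (p-3) > 0" using assms by simp
  show ?thesis unfolding nn_def using t1 t2 t3 by linarith
qed

theorem mainTheorem12:
  fixes p a \<beta> \<alpha> :: real
  assumes "0 < p" "p < 1" "a > a_star p"
    and "0 < \<beta>" "\<beta> < \<alpha>" "Qpa p a \<beta> = 0" "Qpa p a \<alpha> = 0"
  shows "Upsilon p a \<beta> \<alpha> < 0"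
proof -
  note p = assms(1,2) and b = assms(4,5) and z = assms(6,7)
  obtain c where c: "c > 0" and cQ: "\<And>k. \<beta> \<le> k \<Longrightarrow> k \<le> \<alpha> \<Longrightarrow> Qpa p a k \<ge> c*(k-\<beta>)*(\<alpha>-k)"
    using Q_lower[OF assms] by blast
  define S where "S = einterval \<beta> \<alpha>"
  have S: "S = {\<beta><..<\<alpha>}" by (simp add: S_def)
  have kpos: "k > 0" if "k \<in> S" for k using that b S by auto
  have Qpos: "Qpa p a k > 0" if "k \<in> S" for k
  proof -
    have "c*(k-\<beta>)*(\<alpha>-k) > 0" using that c S by auto
    then show ?thesis using cQ[of k] that S by auto
  qed
  have sqQ: "sqrt (Qpa p a k) \<ge> sqrt c * sqrt ((k-\<beta>)*(\<alpha>-k))" if "k \<in> S" for k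
    using cQ[of k] that S by (auto simp flip: real_sqrt_mult simp: mult.assoc)
  define f where "f k = eta p a k / sqrt (Qpa p a k)" for k
  define N where "N k = nn p k / sqrt (Qpa p a k)" for k
  define g where "g k = 1 / sqrt ((k-\<beta>)*(\<alpha>-k))" for k
  have gi: "set_integrable lborel S g" using arcsin_integrable[OF b(2)] by (simp add: S_def g_def[abs_def])
  have Qc: "isCont (Qpa p a) k" if "k > 0" for k
    unfolding Qpa_def[abs_def] using that by (intro continuous_intros) auto
  have ec: "isCont (eta p a) k" if "k > 0" for k
    unfolding eta_def[abs_def] using that by (intro continuous_intros) auto
  have nc: "isCont (nn p) k" if "k > 0" for k
    unfolding nn_def[abs_def] using that by (intro continuous_intros) auto
  have fc: "isCont f k" if "k \<in> S" for k
    unfolding f_def[abs_def] using Qpos[OF that] ec[OF kpos[OF that]] Qc[OF kpos[OF that]]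
    by (intro continuous_intros) auto
  have Nc: "isCont N k" if "k \<in> S" for k
    unfolding N_def[abs_def] using Qpos[OF that] nc[OF kpos[OF that]] Qc[OF kpos[OF that]]
    by (intro continuous_intros) auto
  have bnd: "\<exists>C\<ge>0. \<forall>k\<in>S. norm (e k / sqrt (Qpa p a k)) \<le> norm ((C / sqrt c) * g k)"
    if ecc: "\<And>k. k > 0 \<Longrightarrow> isCont e k" for e
  proof -
    have "continuous_on {\<beta>..\<alpha>} e"
      using ecc b by (intro continuous_at_imp_continuous_on) auto
    then obtain C where C: "C \<ge> 0" "\<And>k. k \<in> {\<beta>..\<alpha>} \<Longrightarrow> norm (e k) \<le> C"
      using continuous_on_compact_bound[of "{\<beta>..\<alpha>}" e] by auto
    have "norm (e k / sqrt (Qpa p a k)) \<le> norm ((C / sqrt c) * g k)" if k: "k \<in> S" for k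
    proof -
      have pos: "sqrt ((k-\<beta>)*(\<alpha>-k)) > 0" using k S by auto
      have "norm (e k / sqrt (Qpa p a k)) = norm (e k) / sqrt (Qpa p a k)"
        using Qpos[OF k] by (simp add: abs_div)
      also have "\<dots> \<le> C / sqrt (Qpa p a k)"
        using C k S Qpos[OF k] by (intro divide_right_mono) auto
      also have "\<dots> \<le> C / (sqrt c * sqrt ((k-\<beta>)*(\<alpha>-k)))"
        using sqQ[OF k] C c pos Qpos[OF k] by (intro divide_left_mono) auto
      also have "\<dots> = norm ((C / sqrt c) * g k)" using C c pos by (simp add: g_def)
      finally show ?thesis .
    qed
    then show ?thesis using C by blast
  qed
  have meas: "set_borel_measurable lborel S h" if "\<And>k. k \<in> S \<Longrightarrow> isCont h k" for h :: "real \<Rightarrow> real"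
    unfolding set_borel_measurable_def measurable_lborel2
    by (rule borel_measurable_continuous_on_indicator)
       (auto simp: S_def intro!: continuous_at_imp_continuous_on that)
  have integ: "set_integrable lborel S (\<lambda>k. e k / sqrt (Qpa p a k))"
    if ecc: "\<And>k. k > 0 \<Longrightarrow> isCont e k" for e
  proof -
    obtain C where C: "C \<ge> 0" "\<forall>k\<in>S. norm (e k / sqrt (Qpa p a k)) \<le> norm ((C / sqrt c) * g k)"
      using bnd[OF ecc] by blast
    show ?thesis
    proof (rule set_integrable_bound[where f = "\<lambda>k. (C / sqrt c) * g k"])
      show "set_integrable lborel S (\<lambda>k. C / sqrt c * g k)" using gi by auto
      show "set_borel_measurable lborel S (\<lambda>k. e k / sqrt (Qpa p a k))"
      proof (rule meas)
        fix k assume k: "k \<in> S"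
        show "isCont (\<lambda>k. e k / sqrt (Qpa p a k)) k"
          using ecc[OF kpos[OF k]] Qc[OF kpos[OF k]] Qpos[OF k] by (intro continuous_intros) auto
      qed
      show "AE x in lborel. x \<in> S \<longrightarrow> norm (e x / sqrt (Qpa p a x)) \<le> norm (C / sqrt c * g x)"
        using C by (intro AE_I2) auto
    qed
  qed
  have fi: "set_integrable lborel S f" unfolding f_def using integ[OF ec] .
  have Ni: "set_integrable lborel S N" unfolding N_def using integ[OF nc] .
  have fNi: "set_integrable lborel S (\<lambda>k. f k - N k)" using fi Ni by auto
  have FT: "(LBINT k=\<beta>..\<alpha>. f k - N k) = FF p a \<alpha> - FF p a \<beta>"
  proof (rule interval_integral_FTC_integrable)
    show "ereal \<beta> < ereal \<alpha>" using b by simp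
    show "(FF p a has_vector_derivative f x - N x) (at x)" if "ereal \<beta> < ereal x" "ereal x < ereal \<alpha>" for x
    proof -
      have x: "x \<in> S" using that by (simp add: S_def einterval_iff)
      have "DERIV (FF p a) x :> f x - N x"
        using FF_deriv[OF kpos[OF x] Qpos[OF x]] by (simp add: f_def N_def diff_divide_distrib)
      then show ?thesis by (simp add: has_real_derivative_iff_has_vector_derivative)
    qed
    show "isCont (\<lambda>k. f k - N k) x" if "ereal \<beta> < ereal x" "ereal x < ereal \<alpha>" for x
      using that fc Nc by (simp add: S_def einterval_iff)
    show "set_integrable lborel (einterval (ereal \<beta>) (ereal \<alpha>)) (\<lambda>k. f k - N k)"
      using fNi by (simp add: S_def)
    have FFc: "isCont (FF p a) k" if "k > 0" for k
      unfolding FF_def[abs_def] using that Qc by (intro continuous_intros) auto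
    show "((FF p a \<circ> real_of_ereal) \<longlongrightarrow> FF p a \<beta>) (at_right (ereal \<beta>))"
      unfolding ereal_tendsto_simps1 using FFc[of \<beta>] b by (simp add: isCont_def filterlim_at_split)
    show "((FF p a \<circ> real_of_ereal) \<longlongrightarrow> FF p a \<alpha>) (at_left (ereal \<alpha>))"
      unfolding ereal_tendsto_simps1 using FFc[of \<alpha>] b by (simp add: isCont_def filterlim_at_split)
  qed
  have FF0: "FF p a \<beta> = 0" "FF p a \<alpha> = 0" using z by (simp_all add: FF_def)
  have U: "Upsilon p a \<beta> \<alpha> = (LINT k:S|lborel. f k)"
    using b by (simp add: Upsilon_def interval_lebesgue_integral_def S_def f_def)
  have FT': "(LINT k:S|lborel. f k - N k) = 0"
    using FT FF0 b by (simp add: interval_lebesgue_integral_def S_def)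
  have split: "(LINT k:S|lborel. f k) = (LINT k:S|lborel. f k - N k) + (LINT k:S|lborel. N k)"
    using set_integral_add(2)[OF fNi Ni] by simp
  have Nneg: "N k < 0" if "k \<in> S" for k
    using nn_neg[OF p kpos[OF that]] Qpos[OF that] by (simp add: N_def divide_neg_pos)
  have "(LINT k:S|lborel. - N k) > 0"
  proof -
    have mi: "integrable lborel (\<lambda>x. indicator S x * (- N x))"
      using Ni unfolding set_integrable_def by (simp add: integrable_minus)
    have nn0: "\<And>x. 0 \<le> indicator S x * (- N x)" using Nneg
      by (simp add: indicator_def less_imp_le)
    have ge: "(LINT k:S|lborel. - N k) \<ge> 0"
    proof -
      have "integral\<^sup>L lborel (\<lambda>x. indicator S x * (- N x)) \<ge> 0"
        by (intro integral_nonneg_AE AE_I2 nn0)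
      then show ?thesis by (simp add: set_lebesgue_integral_def)
    qed
    have ne: "(LINT k:S|lborel. - N k) \<noteq> 0"
    proof
      assume "(LINT k:S|lborel. - N k) = 0"
      then have "integral\<^sup>L lborel (\<lambda>x. indicator S x * (- N x)) = 0"
        by (simp add: set_lebesgue_integral_def)
      then have "AE x in lborel. indicator S x * (- N x) = 0"
        using integral_nonneg_eq_0_iff_AE[OF mi] nn0 by simp
      then have "AE x in lborel. x \<notin> S"
        by eventually_elim (use Nneg in \<open>fastforce simp: indicator_def split: if_splits\<close>)
      then have "S \<in> null_sets lborel" by (subst AE_iff_null_sets) (auto simp: S_def)
      then have "emeasure lborel S = 0" by auto
      then show False using b by (simp add: S)
    qed
    show ?thesis using ge ne by linarith
  qed
  then have "(LINT k:S|lborel. N k) < 0"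
    using set_integral_uminus[OF Ni] by simp
  then show ?thesis using U FT' split by simp
qed


end
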